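(* Let $g \geq 2$ and $h \geq 4$ be integers, and let $x_h$ be the unique real number in $(0,\pi)$ satisfying \[ \frac{\sin x_h}{x_h} = \left( \frac{4}{3 - \cos(\pi/h)} - 1 \right)^h . \] Then for every $\varepsilon > 0$ there is $N_0 = N_0(h,g,\varepsilon)$ such that for all $N \geq N_0$, every $B_h[g]$-set $A \subseteq [N]$ satisfies \[ |A| \leq (1+\varepsilon) \left( \frac{x_h \, h! \, h \, g \, N}{\pi} \right)^{1/h}. \] (That is, $|A| \leq (1+o_N(1)) \left( \frac{x_h h! h g N}{\pi}\right)^{1/h}$.)
   Context: $[N] = \{1,2,\dots,N\}$. For positive integers $h,g$, a set $A \subseteq [N]$ is a $B_h[g]$-set if for every integer $n$ there are at most $g$ distinct multisets $\{a_1,\dots,a_h\}$ of size $h$ with all $a_i \in A$ and $a_1 + \dots + a_h = n$. *)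

theory Defs
  imports "HOL-Analysis.Analysis" "HOL-Library.Multiset"
begin

definition rep_count :: "nat \<Rightarrow> nat set \<Rightarrow> nat \<Rightarrow> nat" where
  "rep_count h A n = card {M :: nat multiset. size M = h \<and> set_mset M \<subseteq> A \<and> sum_mset M = n}"

definition Bhg_set :: "nat \<Rightarrow> nat \<Rightarrow> nat set \<Rightarrow> bool" where
  "Bhg_set h g A \<longleftrightarrow> (\<forall>n. rep_count h A n \<le> g)"

end

theory Submission
  imports Defs "HOL-Combinatorics.Permutations"
begin

lemma cos_lip: "\<bar>cos t - cos s\<bar> \<le> \<bar>t - s\<bar>" for t s :: real
proof -
  have "\<bar>cos t - cos s\<bar> = 2 * \<bar>sin ((t + s) / 2)\<bar> * \<bar>sin ((s - t) / 2)\<bar>"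
    by (simp add: cos_diff_cos abs_mult)
  also have "\<dots> \<le> 2 * 1 * \<bar>(s - t) / 2\<bar>"
    by (intro mult_mono abs_sin_x_le_abs_x) auto
  finally show ?thesis by simp
qed

definition psi :: "real \<Rightarrow> real \<Rightarrow> real" where "psi b t = max (cos t - cos b) 0"

lemma psi_lip: "\<bar>psi b t - psi b s\<bar> \<le> \<bar>t - s\<bar>"
  using cos_lip[of t s] unfolding psi_def by linarith

lemma psi_nonneg: "0 \<le> psi b t" by (simp add: psi_def)
lemma psi_le2: "psi b t \<le> 2" unfolding psi_def using abs_cos_le_one[of t] abs_cos_le_one[of b] by linarith

lemma psi_cont: "continuous_on S (psi b)"
  unfolding psi_def by (intro continuous_intros)

lemma psi_int: "psi b integrable_on {u..v}"
  by (intro integrable_continuous_interval psi_cont)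

lemma cos_shift_nat: "cos (t + 2*pi*real m) = cos t"
proof -
  have "cos (2*pi*real m) = 1" "sin (2*pi*real m) = 0"
    using cos_2npi[of m] sin_2npi[of m] by (simp_all add: mult.commute mult.left_commute)
  thus ?thesis by (simp add: cos_add)
qed

lemma cos_shift_int: "cos (t - 2*pi*real_of_int m) = cos t"
  by (simp add: cos_diff)

lemma psi_shift_nat: "psi b (t + 2*pi*real m) = psi b t"
  unfolding psi_def using cos_shift_nat by simp

lemma psi_shift_int: "psi b (t - 2*pi*real_of_int m) = psi b t"
  unfolding psi_def using cos_shift_int by simp

lemma cell:
  assumes "0 \<le> d"
  shows "d * psi b c - d^2/2 \<le> integral {c..c+d} (psi b)"
proof -
  have hi: "((\<lambda>t. psi b c - (t - c)) has_integral
      ((psi b c * (c+d) - (c+d-c)^2/2) - (psi b c * c - (c-c)^2/2))) {c..c+d}"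
    apply (rule fundamental_theorem_of_calculus)
    using assms apply simp
    apply (auto intro!: derivative_eq_intros simp: has_real_derivative_iff_has_vector_derivative[symmetric])
    apply (simp add: field_simps)
    done
  have "integral {c..c+d} (\<lambda>t. psi b c - (t - c)) \<le> integral {c..c+d} (psi b)"
  proof (rule integral_le)
    show "(\<lambda>t. psi b c - (t - c)) integrable_on {c..c+d}" using hi by blast
    show "psi b integrable_on {c..c+d}" by (rule psi_int)
    fix t assume "t \<in> {c..c+d}"
    thus "psi b c - (t - c) \<le> psi b t" using psi_lip[of b t c] by auto
  qed
  moreover have "integral {c..c+d} (\<lambda>t. psi b c - (t - c)) = d * psi b c - d^2/2"
    using integral_unique[OF hi] by (simp add: algebra_simps)
  ultimately show ?thesis by simp
qed

lemma cells_sum: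
  assumes "0 \<le> d"
  shows "integral {c..c + real K*d} (psi b) = (\<Sum>n<K. integral {c + real n*d..c + real (Suc n)*d} (psi b))"
proof (induction K)
  case 0 then show ?case by simp
next
  case (Suc K)
  have "integral {c..c + real K*d} (psi b) + integral {c + real K*d..c + real (Suc K)*d} (psi b)
      = integral {c..c + real (Suc K)*d} (psi b)"
    by (rule Henstock_Kurzweil_Integration.integral_combine) (use assms in \<open>auto intro: psi_int simp: algebra_simps\<close>)
  then show ?case using Suc by simp
qed

lemma psi_zero_side:
  assumes "0 \<le> b" "b \<le> pi" "b \<le> \<bar>t'\<bar>" "\<bar>t'\<bar> \<le> pi" "t = t' + 2*pi*real m"
  shows "psi b t = 0"
proof -
  have "cos t = cos \<bar>t'\<bar>" using assms(5) cos_shift_nat by (simp add: abs_if)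
  also have "\<dots> \<le> cos b" using assms by (subst cos_mono_le_eq) auto
  finally show ?thesis by (simp add: psi_def)
qed

lemma psi_mid:
  assumes "0 \<le> b" "b \<le> pi" "\<bar>t'\<bar> \<le> b" "t = t' + 2*pi*real m"
  shows "psi b t = cos t - cos b"
proof -
  have "cos t = cos \<bar>t'\<bar>" using assms(4) cos_shift_nat by (simp add: abs_if)
  also have "\<dots> \<ge> cos b" using assms by (subst cos_mono_le_eq) auto
  finally show ?thesis by (simp add: psi_def)
qed

lemma integral_zero_on:
  assumes "\<And>t. t \<in> {u..v} \<Longrightarrow> psi b t = 0"
  shows "integral {u..v} (psi b) = 0"
proof -
  have "integral {u..v} (psi b) = integral {u..v} (\<lambda>t. 0::real)"
    by (rule integral_cong) (use assms in auto)
  thus ?thesis by simp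
qed

lemma period_int:
  assumes "0 \<le> b" "b \<le> pi"
  shows "integral {-pi + 2*pi*real m..pi + 2*pi*real m} (psi b) = 2 * (sin b - b * cos b)"
proof -
  define s where "s = 2*pi*real m"
  have i1: "integral {-pi + s..-b + s} (psi b) = 0"
  proof (rule integral_zero_on)
    fix t assume "t \<in> {-pi + s..-b + s}"
    thus "psi b t = 0" using assms by (intro psi_zero_side[of b "t - s" t m]) (auto simp: s_def)
  qed
  have i3: "integral {b + s..pi + s} (psi b) = 0"
  proof (rule integral_zero_on)
    fix t assume "t \<in> {b + s..pi + s}"
    thus "psi b t = 0" using assms by (intro psi_zero_side[of b "t - s" t m]) (auto simp: s_def)
  qed
  have "integral {-b + s..b + s} (psi b) = integral {-b + s..b + s} (\<lambda>t. cos t - cos b)"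
    by (rule integral_cong) (use assms in \<open>auto intro!: psi_mid[of b "_ - s" _ m] simp: s_def\<close>)
  also have "\<dots> = (sin (b+s) - cos b * (b+s)) - (sin (-b+s) - cos b * (-b+s))"
  proof (rule integral_unique, rule fundamental_theorem_of_calculus)
    show "-b + s \<le> b + s" using assms by simp
  qed (auto intro!: derivative_eq_intros simp: has_real_derivative_iff_has_vector_derivative[symmetric])
  also have "\<dots> = 2 * (sin b - b * cos b)"
  proof -
    have "sin (b+s) = sin b" "sin (-b+s) = - sin b"
      using cos_2npi[of m] sin_2npi[of m] by (simp_all add: s_def sin_add sin_diff mult.commute mult.left_commute)
    thus ?thesis by (simp add: algebra_simps)
  qed
  finally have i2: "integral {-b + s..b + s} (psi b) = 2 * (sin b - b * cos b)" .
  have "integral {-pi + s..-b + s} (psi b) + integral {-b + s..pi + s} (psi b) = integral {-pi + s..pi + s} (psi b)"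
    by (rule Henstock_Kurzweil_Integration.integral_combine) (use assms in \<open>auto intro: psi_int\<close>)
  moreover have "integral {-b + s..b + s} (psi b) + integral {b + s..pi + s} (psi b) = integral {-b + s..pi + s} (psi b)"
    by (rule Henstock_Kurzweil_Integration.integral_combine) (use assms in \<open>auto intro: psi_int\<close>)
  ultimately show ?thesis using i1 i2 i3 by (simp add: s_def)
qed

lemma periods_int:
  assumes "0 \<le> b" "b \<le> pi"
  shows "integral {-pi..-pi + 2*pi*real q} (psi b) = real q * (2 * (sin b - b * cos b))"
proof (induction q)
  case 0 then show ?case by simp
next
  case (Suc q)
  have "integral {-pi..-pi + 2*pi*real q} (psi b) + integral {-pi + 2*pi*real q..-pi + 2*pi*real (Suc q)} (psi b)
      = integral {-pi..-pi + 2*pi*real (Suc q)} (psi b)"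
    by (rule Henstock_Kurzweil_Integration.integral_combine) (auto intro: psi_int)
  moreover have "{-pi + 2*pi*real q..-pi + 2*pi*real (Suc q)} = {-pi + 2*pi*real q..pi + 2*pi*real q}"
    by (simp add: algebra_simps)
  ultimately show ?case using Suc period_int[OF assms, of q] by (simp add: algebra_simps)
qed

lemma cyclic_sum:
  fixes g :: "nat \<Rightarrow> real"
  assumes "\<And>n. g (n + K) = g n"
  shows "(\<Sum>n<K. g (n + j)) = (\<Sum>n<K. g n)"
proof (induction j)
  case 0 then show ?case by simp
next
  case (Suc j)
  have "(\<Sum>n<Suc K. g (n + j)) = g (0 + j) + (\<Sum>n<K. g (Suc n + j))"
    by (rule sum.lessThan_Suc_shift)
  moreover have "(\<Sum>n<Suc K. g (n + j)) = (\<Sum>n<K. g (n + j)) + g (K + j)" by simp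
  moreover have "g (K + j) = g j" using assms[of j] by (simp add: add.commute)
  ultimately show ?case using Suc by simp
qed

lemma RS1:
  assumes d: "0 < d" and K: "real K * d = 2*pi*real q" and a: "-pi \<le> a" "a \<le> -pi + d"
    and b: "0 \<le> b" "b \<le> pi"
  shows "(\<Sum>n<K. psi b (a + real n * d)) \<le> (real q * (2*(sin b - b * cos b)) + 2*d)/d + real K * d/2"
proof -
  define I where "I = 2*(sin b - b * cos b)"
  have each: "psi b (a + real n * d) \<le> integral {a + real n*d..a + real (Suc n)*d} (psi b) / d + d/2" for n
  proof -
    have "d * psi b (a + real n * d) - d^2/2 \<le> integral {a + real n*d..a + real n * d + d} (psi b)"
      using cell[of d b "a + real n * d"] d by simp
    moreover have "a + real (Suc n)*d = a + real n * d + d" by (simp add: algebra_simps)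
    ultimately have "d * psi b (a + real n * d) \<le> integral {a + real n*d..a + real (Suc n)*d} (psi b) + d^2/2"
      by (simp only:)
    thus ?thesis using d by (simp add: field_simps power2_eq_square)
  qed
  have "(\<Sum>n<K. psi b (a + real n * d)) \<le> (\<Sum>n<K. integral {a + real n*d..a + real (Suc n)*d} (psi b) / d + d/2)"
    by (intro sum_mono each)
  also have "\<dots> = integral {a..a + real K*d} (psi b) / d + real K * d/2"
    using cells_sum[of d a K b] d by (simp add: sum.distrib sum_divide_distrib[symmetric])
  also have "integral {a..a + real K*d} (psi b) \<le> integral {-pi..-pi + 2*pi*real q + d} (psi b)"
    by (rule integral_subset_le) (use a K in \<open>auto intro: psi_int psi_nonneg\<close>)
  also have "integral {-pi..-pi + 2*pi*real q + d} (psi b)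
      = integral {-pi..-pi + 2*pi*real q} (psi b) + integral {-pi + 2*pi*real q..-pi + 2*pi*real q + d} (psi b)"
    by (rule Henstock_Kurzweil_Integration.integral_combine[symmetric]) (use d in \<open>auto intro: psi_int\<close>)
  also have "integral {-pi + 2*pi*real q..-pi + 2*pi*real q + d} (psi b)
      \<le> integral {-pi + 2*pi*real q..-pi + 2*pi*real q + d} (\<lambda>_. 2)"
    by (rule integral_le) (auto intro: psi_int psi_le2)
  also have "\<dots> = 2 * d" using d by simp
  finally show ?thesis using periods_int[OF b, of q] d by (simp add: divide_right_mono)
qed

lemma RS2:
  assumes K: "0 < K" and q: "0 < q" and d: "d = 2*pi*real q / real K"
    and b: "0 \<le> b" "b \<le> pi"
  shows "(\<Sum>n<K. psi b (a + real n * d)) \<le> real K * (2*(sin b - b * cos b)) / (2*pi) + 2 + pi * real q"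
proof -
  define I where "I = 2*(sin b - b * cos b)"
  have dpos: "0 < d" using K q d by simp
  have Kd: "real K * d = 2*pi*real q" using K d by simp
  define p where "p = \<lfloor>(a+pi)/(2*pi)\<rfloor>"
  define a0 where "a0 = a - 2*pi*real_of_int p"
  have "real_of_int p \<le> (a+pi)/(2*pi)" "(a+pi)/(2*pi) < real_of_int p + 1"
    unfolding p_def by linarith+
  hence a0: "-pi \<le> a0" "a0 < pi" unfolding a0_def using pi_gt_zero by (simp_all add: field_simps)
  have s0: "psi b (a + real n * d) = psi b (a0 + real n * d)" for n
    using psi_shift_int[of b "a + real n * d" p] by (simp add: a0_def algebra_simps)
  define j where "j = nat \<lfloor>(a0+pi)/d\<rfloor>"
  have jf: "real j = real_of_int \<lfloor>(a0+pi)/d\<rfloor>" unfolding j_def using a0 dpos by simp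
  have f1: "real j \<le> (a0+pi)/d" "(a0+pi)/d < real j + 1"
    using jf by linarith+
  have jb: "real j * d \<le> a0 + pi" "a0 + pi < (real j + 1) * d"
    using f1(1) dpos apply (simp add: field_simps)
    using f1(2) dpos by (simp add: field_simps)
  define a' where "a' = a0 - real j * d"
  have a'1: "-pi \<le> a'" "a' \<le> -pi + d" using jb by (auto simp: a'_def algebra_simps)
  define g where "g n = psi b (a' + real n * d)" for n
  have gp: "g (n + K) = g n" for n
  proof -
    have "a' + real (n + K) * d = (a' + real n * d) + 2*pi*real q" using Kd by (simp add: algebra_simps)
    thus ?thesis unfolding g_def using psi_shift_nat[of b "a' + real n * d" q] by (simp add: add.assoc)
  qed
  have "(\<Sum>n<K. psi b (a + real n * d)) = (\<Sum>n<K. g (n + j))"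
    unfolding g_def s0 by (intro sum.cong) (auto simp: a'_def algebra_simps)
  also have "\<dots> = (\<Sum>n<K. g n)" by (rule cyclic_sum[of g K j, OF gp])
  also have "\<dots> \<le> (real q * I + 2*d)/d + real K * d/2"
    unfolding g_def I_def by (rule RS1[OF dpos Kd a'1 b])
  also have "\<dots> = real K * I / (2*pi) + 2 + pi * real q"
    using K q dpos unfolding d by (simp add: field_simps)
  finally show ?thesis by (simp add: I_def)
qed

lemma bathtub:
  assumes S: "finite S" "S \<subseteq> {c..<c+K}" and K: "0 < K" and q: "0 < q" and d: "d = 2*pi*real q / real K"
    and b: "0 \<le> b" "b \<le> pi" and G: "0 \<le> G" and r: "\<And>n. n \<in> S \<Longrightarrow> 0 \<le> r n \<and> r n \<le> G"
  shows "(\<Sum>n\<in>S. r n * cos (real n * d - \<phi>))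
     \<le> G * (real K * (2*(sin b - b * cos b)) / (2*pi) + 2 + pi * real q) + cos b * (\<Sum>n\<in>S. r n)"
proof -
  have pw: "r n * cos (real n * d - \<phi>) \<le> G * psi b (real n * d - \<phi>) + cos b * r n" if "n \<in> S" for n
  proof -
    have "r n * (cos (real n * d - \<phi>) - cos b) \<le> r n * psi b (real n * d - \<phi>)"
      using r[OF that] by (intro mult_left_mono) (auto simp: psi_def)
    also have "\<dots> \<le> G * psi b (real n * d - \<phi>)"
      using r[OF that] by (intro mult_right_mono psi_nonneg) auto
    finally show ?thesis by (simp add: algebra_simps)
  qed
  have "(\<Sum>n\<in>S. r n * cos (real n * d - \<phi>)) \<le> (\<Sum>n\<in>S. G * psi b (real n * d - \<phi>) + cos b * r n)"
    by (intro sum_mono pw)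
  also have "\<dots> = G * (\<Sum>n\<in>S. psi b (real n * d - \<phi>)) + cos b * (\<Sum>n\<in>S. r n)"
    by (simp add: sum.distrib sum_distrib_left)
  also have "(\<Sum>n\<in>S. psi b (real n * d - \<phi>)) \<le> (\<Sum>n\<in>{c..<c+K}. psi b (real n * d - \<phi>))"
    by (rule sum_mono2) (use S in \<open>auto intro: psi_nonneg\<close>)
  also have "\<dots> = (\<Sum>n<K. psi b ((real c * d - \<phi>) + real n * d))"
  proof -
    have "(\<Sum>n\<in>{c..<c+K}. psi b (real n * d - \<phi>)) = (\<Sum>n\<in>{0+c..<K+c}. psi b (real n * d - \<phi>))"
      by (simp add: add.commute)
    also have "\<dots> = (\<Sum>n\<in>{0..<K}. psi b (real (n + c) * d - \<phi>))"
      by (rule sum.shift_bounds_nat_ivl)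
    finally show ?thesis by (simp add: atLeast0LessThan algebra_simps)
  qed
  also have "\<dots> \<le> real K * (2*(sin b - b * cos b)) / (2*pi) + 2 + pi * real q"
    by (rule RS2[OF K q d b])
  finally show ?thesis using G by (simp add: mult_left_mono)
qed

definition Dk :: "nat \<Rightarrow> real \<Rightarrow> real" where
  "Dk h s = (\<Sum>k<h. cos ((real h - 1 - 2 * real k) * s))"

lemma dirichlet: "sin (real h * s) = sin s * Dk h s"
proof -
  define g where "g k = sin ((real h - 2 * real k) * s)" for k
  have t: "2 * sin s * cos ((real h - 1 - 2 * real k) * s) = g k - g (Suc k)" for k
  proof -
    have "2 * sin s * cos ((real h - 1 - 2 * real k) * s)
        = sin (s + (real h - 1 - 2 * real k) * s) + sin (s - (real h - 1 - 2 * real k) * s)"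
      using sin_times_cos[of s "(real h - 1 - 2 * real k) * s"] by (simp add: field_simps)
    moreover have "s + (real h - 1 - 2 * real k) * s = (real h - 2 * real k) * s"
      by (simp add: algebra_simps)
    moreover have "s - (real h - 1 - 2 * real k) * s = - ((real h - 2 * real (Suc k)) * s)"
      by (simp add: algebra_simps)
    ultimately show ?thesis by (simp add: g_def)
  qed
  have "2 * (sin s * Dk h s) = (\<Sum>k<h. g k - g (Suc k))"
    unfolding Dk_def by (simp add: sum_distrib_left t mult.assoc[symmetric])
  also have "\<dots> = g 0 - g h" by (rule sum_lessThan_telescope')
  also have "\<dots> = 2 * sin (real h * s)"
    by (simp add: g_def algebra_simps)
  finally show ?thesis by simp
qed

lemma Dk_mono:
  assumes h: "1 \<le> h" and s: "0 \<le> s" "s \<le> pi / (2 * real h)"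
  shows "Dk h (pi / (2 * real h)) \<le> Dk h s"
  unfolding Dk_def
proof (rule sum_mono)
  fix k assume k: "k \<in> {..<h}"
  define m where "m = real h - 1 - 2 * real k"
  define a where "a = pi / (2 * real h)"
  have m: "\<bar>m\<bar> \<le> real h" using k by (auto simp: m_def abs_if)
  have a: "0 \<le> a" "real h * a = pi/2" using h by (auto simp: a_def)
  have "\<bar>m\<bar> * a \<le> real h * a" using m a by (intro mult_right_mono) auto
  hence ma: "\<bar>m\<bar> * a \<le> pi" using a pi_gt_zero by linarith
  have ms: "\<bar>m\<bar> * s \<le> \<bar>m\<bar> * a" using s by (intro mult_left_mono) (auto simp: a_def)
  have "cos (\<bar>m\<bar> * a) \<le> cos (\<bar>m\<bar> * s)"
    using ms ma s a by (subst cos_mono_le_eq) auto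
  moreover have "cos (m * a) = cos (\<bar>m\<bar> * a)" "cos (m * s) = cos (\<bar>m\<bar> * s)"
    by (simp_all add: abs_if)
  ultimately show "cos ((real h - 1 - 2 * real k) * (pi / (2 * real h))) \<le> cos ((real h - 1 - 2 * real k) * s)"
    by (simp add: m_def a_def)
qed

lemma sin_ratio:
  assumes h: "1 \<le> h" and s: "0 \<le> s" "s \<le> pi / (2 * real h)"
  shows "sin s \<le> sin (pi / (2 * real h)) * sin (real h * s)"
proof -
  define a where "a = pi / (2 * real h)"
  have a: "0 < a" "a \<le> pi/2" using h by (auto simp: a_def field_simps)
  have sa: "0 < sin a" using a by (intro sin_gt_zero) auto
  have "sin (real h * a) = 1" using h by (simp add: a_def)
  hence D1: "sin a * Dk h a = 1" using dirichlet[of h a] by simp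
  have ss: "0 \<le> sin s" using s a by (intro sin_ge_zero) (auto simp: a_def)
  have "sin s = sin s * (sin a * Dk h a)" using D1 by simp
  also have "\<dots> = sin a * (sin s * Dk h a)" by (simp add: algebra_simps)
  also have "\<dots> \<le> sin a * (sin s * Dk h s)"
    using Dk_mono[OF h s] ss sa unfolding a_def by (intro mult_left_mono) auto
  also have "\<dots> = sin a * sin (real h * s)" using dirichlet[of h s] by simp
  finally show ?thesis by (simp add: a_def)
qed

lemma cos_pointwise:
  assumes h: "1 \<le> h" and u: "\<bar>u\<bar> \<le> pi / real h"
  shows "(1 + cos (pi / real h)) / 2 + ((1 - cos (pi / real h)) / 2) * cos (real h * u) \<le> cos u"
proof -
  define s where "s = \<bar>u\<bar> / 2"
  define a where "a = pi / (2 * real h)"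
  have s: "0 \<le> s" "s \<le> a" using u by (auto simp: s_def a_def)
  have r: "sin s \<le> sin a * sin (real h * s)" using sin_ratio[OF h] s by (simp add: a_def)
  have "a \<le> pi/2" using h by (auto simp: a_def field_simps)
  hence ss: "0 \<le> sin s" using s by (intro sin_ge_zero) auto
  have sq: "sin s ^ 2 \<le> (sin a * sin (real h * s)) ^ 2"
    using r ss by (intro power_mono) auto
  have e1: "sin s ^ 2 = sin (u/2) ^ 2"
  proof (cases "u<0")
    case True
    hence "s = - (u/2)" by (simp add: s_def)
    thus ?thesis by simp
  qed (simp add: s_def)
  have e2: "sin (real h * s) ^ 2 = sin (real h * u/2) ^ 2"
  proof (cases "u<0")
    case True
    hence "real h * s = - (real h * u/2)" by (simp add: s_def)
    thus ?thesis by simp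
  qed (simp add: s_def)
  have c1: "cos u = 1 - 2 * sin s ^ 2"
    using cos_double_sin[of "u/2"] e1 by simp
  have c2: "cos (real h * u) = 1 - 2 * sin (real h * s) ^ 2"
    using cos_double_sin[of "real h * u/2"] e2 by simp
  have c3: "cos (pi / real h) = 1 - 2 * sin a ^ 2"
    using cos_double_sin[of a] h by (simp add: a_def)
  have "(sin a * sin (real h * s)) ^ 2 = sin a ^ 2 * sin (real h * s) ^ 2" by (rule power_mult_distrib)
  hence sq': "sin s ^ 2 \<le> sin a ^ 2 * sin (real h * s) ^ 2" using sq by simp
  have eq: "(1 + (1 - 2*A))/2 + (1 - (1 - 2*A))/2 * (1 - 2*B) = 1 - 2*(A*B)" for A B :: real
    by (simp add: field_simps)
  show ?thesis unfolding c1 c2 c3 using sq' eq[of "sin a ^ 2" "sin (real h * s) ^ 2"] by linarith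
qed

lemma tcos_lt_sin:
  fixes t :: real assumes "0 < t" "t \<le> pi"
  shows "t * cos t < sin t"
proof (cases "t = pi")
  case True then show ?thesis by simp
next
  case False
  hence tp: "t < pi" using assms by simp
  have "(\<lambda>y. sin y - y * cos y) 0 < (\<lambda>y. sin y - y * cos y) t"
  proof (rule DERIV_pos_imp_increasing_open[OF assms(1)])
    fix y :: real assume y: "0 < y" "y < t"
    have "DERIV (\<lambda>y. sin y - y * cos y) y :> y * sin y"
      by (auto intro!: derivative_eq_intros simp: algebra_simps)
    moreover have "0 < y * sin y" using y tp by (intro mult_pos_pos sin_gt_zero) auto
    ultimately show "\<exists>z. DERIV (\<lambda>y. sin y - y * cos y) y :> z \<and> z > 0" by blast
  next
    show "continuous_on {0..t} (\<lambda>y. sin y - y * cos y)" by (intro continuous_intros)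
  qed
  thus ?thesis by simp
qed

lemma sinc_decr:
  fixes s t :: real assumes "0 < s" "s < t" "t \<le> pi"
  shows "sin t / t < sin s / s"
proof -
  have "(\<lambda>y. sin y / y) s > (\<lambda>y. sin y / y) t"
  proof (rule DERIV_neg_imp_decreasing[OF assms(2)])
    fix y :: real assume y: "s \<le> y" "y \<le> t"
    hence yp: "0 < y" "y \<le> pi" using assms by auto
    have "DERIV (\<lambda>y. sin y / y) y :> (cos y * y - sin y) / (y * y)"
      using yp by (auto intro!: derivative_eq_intros simp: power2_eq_square)
    moreover have "(cos y * y - sin y) / (y * y) < 0"
      using tcos_lt_sin[OF yp] yp by (intro divide_neg_pos) (auto simp: algebra_simps)
    ultimately show "\<exists>z. DERIV (\<lambda>y. sin y / y) y :> z \<and> z < 0" by blast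
  qed
  thus ?thesis by simp
qed

definition Ls :: "nat set \<Rightarrow> nat \<Rightarrow> nat list set" where
  "Ls A h = {xs. set xs \<subseteq> A \<and> length xs = h}"

definition cnt :: "nat set \<Rightarrow> nat \<Rightarrow> nat \<Rightarrow> nat" where
  "cnt A h n = card {xs \<in> Ls A h. sum_list xs = n}"

lemma fiber_sub:
  assumes "mset xs0 = M"
  shows "{xs. mset xs = M} \<subseteq> (\<lambda>p. permute_list p xs0) ` {p. p permutes {..<length xs0}}"
proof
  fix xs assume "xs \<in> {xs. mset xs = M}"
  hence "mset xs = mset xs0" using assms by simp
  then obtain p where "p permutes {..<length xs0}" "permute_list p xs0 = xs"
    by (rule mset_eq_permutation)
  thus "xs \<in> (\<lambda>p. permute_list p xs0) ` {p. p permutes {..<length xs0}}" by blast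
qed

lemma fiber_card: "finite {xs. mset xs = M} \<and> card {xs. mset xs = M} \<le> fact (size M)"
proof -
  obtain xs0 where x0: "mset xs0 = M" using ex_mset by blast
  have fin: "finite {p. p permutes {..<length xs0}}" by (rule finite_permutations) simp
  have "card {xs. mset xs = M} \<le> card ((\<lambda>p. permute_list p xs0) ` {p. p permutes {..<length xs0}})"
    by (rule card_mono[OF finite_imageI[OF fin] fiber_sub[OF x0]])
  also have "\<dots> \<le> card {p. p permutes {..<length xs0}}" by (rule card_image_le[OF fin])
  also have "\<dots> = fact (size M)" using x0 by (subst card_permutations[of _ "length xs0"]) auto
  finally show ?thesis using finite_subset[OF fiber_sub[OF x0] finite_imageI[OF fin]] by simp
qed

lemma Ls_finite: "finite A \<Longrightarrow> finite (Ls A h)"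
  unfolding Ls_def by (rule finite_lists_length_eq)

lemma cnt_bound:
  assumes A: "finite A" and B: "Bhg_set h g A"
  shows "cnt A h n \<le> fact h * g"
proof -
  define X where "X = {xs \<in> Ls A h. sum_list xs = n}"
  define Ms where "Ms = {M :: nat multiset. size M = h \<and> set_mset M \<subseteq> A \<and> sum_mset M = n}"
  have fX: "finite X" using Ls_finite[OF A] by (simp add: X_def)
  have MsX: "Ms \<subseteq> mset ` X"
  proof
    fix M assume "M \<in> Ms"
    moreover obtain xs where "mset xs = M" using ex_mset by blast
    ultimately show "M \<in> mset ` X"
      by (auto simp: Ms_def X_def Ls_def sum_mset_sum_list[symmetric])
  qed
  have XMs: "mset ` X \<subseteq> Ms"
    by (auto simp: Ms_def X_def Ls_def sum_mset_sum_list)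
  have fMs: "finite Ms" using finite_subset[OF MsX finite_imageI[OF fX]] .
  have cY: "card (mset ` X) \<le> g"
  proof -
    have "card (mset ` X) \<le> card Ms" by (rule card_mono[OF fMs XMs])
    also have "\<dots> = rep_count h A n" by (simp add: rep_count_def Ms_def)
    also have "\<dots> \<le> g" using B by (simp add: Bhg_set_def)
    finally show ?thesis .
  qed
  have "X \<subseteq> (\<Union>M\<in>mset ` X. {xs. mset xs = M})" by auto
  hence "card X \<le> card (\<Union>M\<in>mset ` X. {xs. mset xs = M})"
    by (intro card_mono) (auto intro: fiber_card[THEN conjunct1] simp: fX)
  also have "\<dots> \<le> (\<Sum>M\<in>mset ` X. card {xs. mset xs = M})"
    by (rule card_UN_le) (simp add: fX)
  also have "\<dots> \<le> (\<Sum>M\<in>mset ` X. fact h)"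
  proof (rule sum_mono)
    fix M assume "M \<in> mset ` X"
    hence "size M = h" by (auto simp: X_def Ls_def)
    thus "card {xs. mset xs = M} \<le> fact h" using fiber_card[of M] by simp
  qed
  also have "\<dots> = card (mset ` X) * fact h" by simp
  also have "\<dots> \<le> g * fact h" using cY by simp
  finally show ?thesis by (simp add: cnt_def X_def mult.commute)
qed

lemma Ls_Suc: "Ls A (Suc h) = (\<lambda>(a, xs). a # xs) ` (A \<times> Ls A h)"
proof
  show "Ls A (Suc h) \<subseteq> (\<lambda>(a, xs). a # xs) ` (A \<times> Ls A h)"
  proof
    fix ys assume "ys \<in> Ls A (Suc h)"
    then obtain a xs where "ys = a # xs" "length xs = h" "set ys \<subseteq> A"
      by (auto simp: Ls_def length_Suc_conv)
    thus "ys \<in> (\<lambda>(a, xs). a # xs) ` (A \<times> Ls A h)" by (force simp: Ls_def)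
  qed
qed (auto simp: Ls_def)

lemma power_expand:
  fixes \<theta> :: real
  assumes A: "finite A"
  shows "(\<Sum>a\<in>A. cis (real a * \<theta>)) ^ h = (\<Sum>xs\<in>Ls A h. cis (real (sum_list xs) * \<theta>))"
proof (induction h)
  case 0
  have "Ls A 0 = {[]}" by (auto simp: Ls_def)
  then show ?case by simp
next
  case (Suc h)
  have inj: "inj_on (\<lambda>(a, xs). a # xs) (A \<times> Ls A h)" by (auto simp: inj_on_def)
  have "(\<Sum>xs\<in>Ls A (Suc h). cis (real (sum_list xs) * \<theta>))
      = (\<Sum>(a, xs)\<in>A \<times> Ls A h. cis (real (sum_list (a # xs)) * \<theta>))"
    unfolding Ls_Suc by (subst sum.reindex[OF inj]) (simp add: case_prod_unfold)
  also have "\<dots> = (\<Sum>a\<in>A. \<Sum>xs\<in>Ls A h. cis (real a * \<theta>) * cis (real (sum_list xs) * \<theta>))"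
    by (subst sum.cartesian_product[symmetric]) (simp add: cis_mult distrib_right)
  also have "\<dots> = (\<Sum>a\<in>A. cis (real a * \<theta>)) * (\<Sum>xs\<in>Ls A h. cis (real (sum_list xs) * \<theta>))"
    by (simp add: sum_product)
  finally show ?case using Suc by simp
qed

lemma sum_list_bounds:
  assumes "set xs \<subseteq> {1..N}"
  shows "length xs \<le> sum_list xs \<and> sum_list xs \<le> length xs * N"
  using assms by (induction xs) auto

lemma group_sum:
  fixes w :: "nat \<Rightarrow> 'a::comm_ring_1"
  assumes A: "finite A" "A \<subseteq> {1..N}"
  shows "(\<Sum>xs\<in>Ls A h. w (sum_list xs)) = (\<Sum>n\<in>{h..h*N}. of_nat (cnt A h n) * w n)"
proof -
  have im: "sum_list ` Ls A h \<subseteq> {h..h*N}"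
    using sum_list_bounds[of _ N] A(2) by (force simp: Ls_def mult.commute)
  have "(\<Sum>xs\<in>Ls A h. w (sum_list xs)) = (\<Sum>n\<in>{h..h*N}. \<Sum>xs\<in>{xs. xs \<in> Ls A h \<and> sum_list xs = n}. w (sum_list xs))"
    by (rule sum.group[symmetric, OF Ls_finite[OF A(1)] _ im]) simp
  also have "\<dots> = (\<Sum>n\<in>{h..h*N}. of_nat (cnt A h n) * w n)"
    by (intro sum.cong refl) (simp add: cnt_def)
  finally show ?thesis .
qed

definition fexp :: "nat set \<Rightarrow> real \<Rightarrow> complex" where
  "fexp A \<theta> = (\<Sum>a\<in>A. cis (real a * \<theta>))"

lemma norm_as_re:
  fixes z :: complex
  shows "\<exists>\<phi>. cmod z = Re (z * cis (- \<phi>))"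
proof -
  have "z * cis (- Arg z) = rcis (cmod z) (Arg z) * cis (- Arg z)" by (simp add: rcis_cmod_Arg)
  also have "\<dots> = of_real (cmod z)" by (simp add: rcis_def mult.assoc cis_mult)
  finally show ?thesis by (intro exI[of _ "Arg z"]) simp
qed

lemma sum_cnt:
  assumes A: "finite A" "A \<subseteq> {1..N}"
  shows "(\<Sum>n\<in>{h..h*N}. real (cnt A h n)) = real (card A) ^ h"
proof -
  have "(\<Sum>xs\<in>Ls A h. (\<lambda>_. 1::real) (sum_list xs)) = (\<Sum>n\<in>{h..h*N}. of_nat (cnt A h n) * 1)"
    by (rule group_sum[OF A])
  moreover have "(\<Sum>xs\<in>Ls A h. (\<lambda>_. 1::real) (sum_list xs)) = real (card A) ^ h"
    by (simp add: Ls_def card_lists_length_eq[OF A(1)])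
  ultimately show ?thesis by simp
qed

lemma upper:
  assumes A: "finite A" "A \<subseteq> {1..N}" and N: "1 \<le> N" and h: "1 \<le> h" and g: "1 \<le> g"
    and B: "Bhg_set h g A" and k: "1 \<le> card A" and q: "0 < q" "q \<le> h"
  defines "G \<equiv> fact h * real g" and "T \<equiv> real (card A) ^ h"
  defines "\<sigma> \<equiv> pi * T / (G * real (h * N))"
  shows "0 < \<sigma> \<and> \<sigma> \<le> pi \<and>
    cmod (fexp A (2*pi*real q / real (h*N))) ^ h \<le> T * sin \<sigma> / \<sigma> + G * (2 + pi * real h)"
proof -
  define \<theta> where "\<theta> = 2*pi*real q / real (h*N)"
  have Gpos: "0 < G" using g by (simp add: G_def)
  have Tpos: "0 < T" using k by (simp add: T_def)
  have hN: "0 < real (h*N)" using h N by simp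
  have cb: "real (cnt A h n) \<le> G" for n
    using cnt_bound[OF A(1) B, of n] unfolding G_def
    by (metis of_nat_fact of_nat_le_iff of_nat_mult)
  have sumT: "(\<Sum>n\<in>{h..h*N}. real (cnt A h n)) = T" using sum_cnt[OF A] by (simp add: T_def)
  have "T \<le> (\<Sum>n\<in>{h..h*N}. G)" unfolding sumT[symmetric] by (intro sum_mono cb)
  also have "\<dots> = G * real (h*N + 1 - h)" by simp
  also have "\<dots> \<le> G * real (h*N)"
  proof -
    have "h*N + 1 - h \<le> h*N" using h by simp
    hence "real (h*N + 1 - h) \<le> real (h*N)" by (simp only: of_nat_le_iff)
    thus ?thesis using Gpos by (intro mult_left_mono) auto
  qed
  finally have TG: "T \<le> G * real (h*N)" .
  have spos: "0 < \<sigma>" unfolding \<sigma>_def using Tpos Gpos hN by simp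
  have sle: "\<sigma> \<le> pi" unfolding \<sigma>_def using TG Gpos hN pi_gt_zero
    by (simp add: divide_le_eq mult.commute mult_left_mono)
  have z: "fexp A \<theta> ^ h = (\<Sum>n\<in>{h..h*N}. of_nat (cnt A h n) * cis (real n * \<theta>))"
    unfolding fexp_def power_expand[OF A(1)] by (rule group_sum[OF A])
  obtain \<phi> where phi: "cmod (fexp A \<theta> ^ h) = Re (fexp A \<theta> ^ h * cis (- \<phi>))"
    using norm_as_re by blast
  have "Re (fexp A \<theta> ^ h * cis (- \<phi>)) = (\<Sum>n\<in>{h..h*N}. real (cnt A h n) * cos (real n * \<theta> - \<phi>))"
    unfolding z sum_distrib_right Re_sum by (intro sum.cong refl) (simp add: mult.assoc cis_mult)
  also have "\<dots> \<le> G * (real (h*N) * (2*(sin \<sigma> - \<sigma> * cos \<sigma>)) / (2*pi) + 2 + pi * real q)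
      + cos \<sigma> * (\<Sum>n\<in>{h..h*N}. real (cnt A h n))"
    by (rule bathtub[where c = h and K = "h*N"]) (use h N q spos sle Gpos cb in \<open>auto simp: \<theta>_def\<close>)
  also have "\<dots> = T * sin \<sigma> / \<sigma> + G * (2 + pi * real q)"
  proof -
    have e: "G * real (h*N) = pi * T / \<sigma>" using spos Gpos hN Tpos by (simp add: \<sigma>_def field_simps)
    have "G * (real (h*N) * (2*(sin \<sigma> - \<sigma> * cos \<sigma>)) / (2*pi)) = (G * real (h*N)) * (sin \<sigma> - \<sigma> * cos \<sigma>) / pi"
      by (simp add: field_simps)
    also have "\<dots> = T * sin \<sigma> / \<sigma> - T * cos \<sigma>" unfolding e using spos by (simp add: field_simps)
    finally show ?thesis unfolding sumT by (simp add: algebra_simps)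
  qed
  also have "\<dots> \<le> T * sin \<sigma> / \<sigma> + G * (2 + pi * real h)"
    using q Gpos by (simp add: mult_left_mono)
  finally show ?thesis using spos sle phi by (simp add: \<theta>_def norm_power)
qed

lemma re_fexp: "Re (fexp A \<theta> * cis (- \<phi>)) = (\<Sum>a\<in>A. cos (real a * \<theta> - \<phi>))"
  unfolding fexp_def sum_distrib_right Re_sum by (intro sum.cong refl) (simp add: cis_mult)

lemma lower:
  assumes A: "finite A" "A \<subseteq> {1..N}" and N: "1 \<le> N" and h: "1 \<le> h"
  shows "real (card A) * ((1 + cos (pi / real h)) / 2)
    \<le> cmod (fexp A (2*pi*real 1 / real (h*N))) + ((1 - cos (pi / real h)) / 2) * cmod (fexp A (2*pi*real h / real (h*N)))"
proof -
  define c where "c = cos (pi / real h)"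
  define \<theta>1 where "\<theta>1 = 2*pi*real 1 / real (h*N)"
  define \<theta>2 where "\<theta>2 = 2*pi*real h / real (h*N)"
  define \<phi>0 where "\<phi>0 = pi * (real N + 1) / real (h*N)"
  have hN: "0 < real h" "0 < real N" using h N by auto
  have pw: "(1 + c) / 2 + ((1 - c) / 2) * cos (real a * \<theta>2 - real h * \<phi>0) \<le> cos (real a * \<theta>1 - \<phi>0)"
    if a: "a \<in> A" for a
  proof -
    have a1: "1 \<le> real a" "real a \<le> real N" using a A by auto
    have u: "real a * \<theta>1 - \<phi>0 = pi * (2 * real a - real N - 1) / (real h * real N)"
      using hN by (simp add: \<theta>1_def \<phi>0_def field_simps)
    have "\<bar>2 * real a - real N - 1\<bar> \<le> real N" using a1 by auto
    hence "pi * \<bar>2 * real a - real N - 1\<bar> / (real h * real N) \<le> pi * real N / (real h * real N)"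
      using hN by (intro divide_right_mono mult_left_mono) auto
    moreover have "\<bar>real a * \<theta>1 - \<phi>0\<bar> = pi * \<bar>2 * real a - real N - 1\<bar> / (real h * real N)"
      unfolding u using hN by (simp add: abs_mult abs_divide)
    ultimately have "\<bar>real a * \<theta>1 - \<phi>0\<bar> \<le> pi * real N / (real h * real N)" by simp
    also have "\<dots> = pi / real h" using hN by simp
    finally have ub: "\<bar>real a * \<theta>1 - \<phi>0\<bar> \<le> pi / real h" .
    have "real h * (real a * \<theta>1 - \<phi>0) = real a * \<theta>2 - real h * \<phi>0"
      using hN by (simp add: \<theta>1_def \<theta>2_def field_simps)
    thus ?thesis using cos_pointwise[OF h ub] by (simp add: c_def)
  qed
  have "real (card A) * ((1 + c) / 2) + ((1 - c) / 2) * Re (fexp A \<theta>2 * cis (- (real h * \<phi>0)))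
      = (\<Sum>a\<in>A. (1 + c) / 2 + ((1 - c) / 2) * cos (real a * \<theta>2 - real h * \<phi>0))"
    unfolding re_fexp by (simp add: sum.distrib sum_distrib_left)
  also have "\<dots> \<le> (\<Sum>a\<in>A. cos (real a * \<theta>1 - \<phi>0))" by (intro sum_mono pw)
  also have "\<dots> = Re (fexp A \<theta>1 * cis (- \<phi>0))" unfolding re_fexp ..
  also have "\<dots> \<le> cmod (fexp A \<theta>1 * cis (- \<phi>0))" by (rule complex_Re_le_cmod)
  also have "\<dots> = cmod (fexp A \<theta>1)" by (simp add: norm_mult)
  finally have main: "real (card A) * ((1 + c) / 2) + ((1 - c) / 2) * Re (fexp A \<theta>2 * cis (- (real h * \<phi>0)))
      \<le> cmod (fexp A \<theta>1)" .
  have "- cmod (fexp A \<theta>2) \<le> Re (fexp A \<theta>2 * cis (- (real h * \<phi>0)))"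
    using abs_Re_le_cmod[of "fexp A \<theta>2 * cis (- (real h * \<phi>0))"] by (simp add: norm_mult)
  moreover have "0 \<le> (1 - c) / 2" using cos_le_one[of "pi / real h"] by (simp add: c_def)
  ultimately have "- ((1 - c) / 2) * cmod (fexp A \<theta>2) \<le> ((1 - c) / 2) * Re (fexp A \<theta>2 * cis (- (real h * \<phi>0)))"
    by (metis mult_left_mono mult_minus_left mult_minus_right)
  thus ?thesis using main by (simp add: c_def \<theta>1_def \<theta>2_def)
qed

lemma key:
  assumes A: "finite A" "A \<subseteq> {1..N}" and N: "1 \<le> N" and h: "2 \<le> h" and g: "1 \<le> g"
    and B: "Bhg_set h g A" and k: "1 \<le> card A"
  defines "G \<equiv> fact h * real g" and "T \<equiv> real (card A) ^ h"
  defines "\<sigma> \<equiv> pi * T / (G * real (h * N))"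
  shows "0 < \<sigma> \<and> \<sigma> \<le> pi \<and>
    T * (4 / (3 - cos (pi / real h)) - 1) ^ h \<le> T * sin \<sigma> / \<sigma> + G * (2 + pi * real h)"
proof -
  define c where "c = cos (pi / real h)"
  define X where "X = cmod (fexp A (2*pi*real 1 / real (h*N)))"
  define Y where "Y = cmod (fexp A (2*pi*real h / real (h*N)))"
  have h1: "1 \<le> h" using h by simp
  have uX: "0 < \<sigma> \<and> \<sigma> \<le> pi \<and> X ^ h \<le> T * sin \<sigma> / \<sigma> + G * (2 + pi * real h)"
    unfolding X_def \<sigma>_def T_def G_def by (rule upper[OF A N h1 g B k]) (use h in auto)
  have uY: "Y ^ h \<le> T * sin \<sigma> / \<sigma> + G * (2 + pi * real h)"
    unfolding Y_def \<sigma>_def T_def G_def using upper[OF A N h1 g B k, of h] h by auto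
  have p1: "pi / real h \<le> pi / 2" using h by (intro divide_left_mono) auto
  have p2: "0 \<le> pi / real h" by simp
  have c0: "0 \<le> c" unfolding c_def using p1 p2 by (intro cos_ge_zero) linarith+
  have c1: "c \<le> 1" unfolding c_def by simp
  have lo: "real (card A) * ((1 + c) / 2) \<le> X + ((1 - c) / 2) * Y"
    unfolding c_def X_def Y_def by (rule lower[OF A N h1])
  define W where "W = max X Y"
  have "X + ((1 - c) / 2) * Y \<le> W + ((1 - c) / 2) * W"
    unfolding W_def using c1 by (intro add_mono mult_left_mono) auto
  hence "real (card A) * ((1 + c) / 2) \<le> W + ((1 - c) / 2) * W" using lo by linarith
  moreover have "W + ((1 - c) / 2) * W = W * ((3 - c) / 2)" by (simp add: field_simps)
  ultimately have "real (card A) * ((1 + c) / 2) \<le> W * ((3 - c) / 2)" by simp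
  hence kw: "real (card A) * (4 / (3 - c) - 1) \<le> W"
    using c1 by (simp add: field_simps)
  have rho0: "0 \<le> 4 / (3 - c) - 1" using c0 c1 by (simp add: field_simps)
  have "T * (4 / (3 - c) - 1) ^ h = (real (card A) * (4 / (3 - c) - 1)) ^ h"
    by (simp add: T_def power_mult_distrib)
  also have "\<dots> \<le> W ^ h" using kw rho0 by (intro power_mono) auto
  also have "\<dots> \<le> T * sin \<sigma> / \<sigma> + G * (2 + pi * real h)"
    unfolding W_def using uX uY by (simp add: max_def)
  finally show ?thesis using uX by (simp add: c_def)
qed

theorem theorem1p1:
  fixes h g :: nat and x :: real
  assumes "g \<ge> 2" and "h \<ge> 4"
    and "0 < x" and "x < pi"
    and "sin x / x = (4 / (3 - cos (pi / real h)) - 1) ^ h"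
  shows "\<forall>\<epsilon>>0. \<exists>N0. \<forall>N\<ge>N0. \<forall>A. A \<subseteq> {1..N} \<and> Bhg_set h g A \<longrightarrow>
           real (card A) \<le> (1 + \<epsilon>) * root h (x * fact h * real h * real g * real N / pi)"
proof (intro allI impI)
  fix \<epsilon> :: real assume eps: "0 < \<epsilon>"
  have h2: "2 \<le> h" and h1: "1 \<le> h" and g1: "1 \<le> g" and hpos: "0 < h" using assms by auto
  define G where "G = fact h * real g"
  define E where "E = G * (2 + pi * real h)"
  define x' where "x' = (1 + \<epsilon>) ^ h * x"
  define \<delta>0 where "\<delta>0 = sin x / x - sin x' / x'"
  define N0 where "N0 = (if pi \<le> x' then 0 else nat \<lceil>E * pi / (\<delta>0 * x' * G * real h)\<rceil> + 1)"
  have Gpos: "0 < G" using g1 by (simp add: G_def)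
  have "0 < 2 + pi * real h" using pi_gt_zero by (simp add: add_pos_nonneg)
  hence Epos: "0 < E" using Gpos by (simp add: E_def)
  have xx': "x < x'" unfolding x'_def using assms(3) eps h1
    by (simp add: one_less_power)
  have x'pos: "0 < x'" using xx' assms(3) by simp
  show "\<exists>N0. \<forall>N\<ge>N0. \<forall>A. A \<subseteq> {1..N} \<and> Bhg_set h g A \<longrightarrow>
           real (card A) \<le> (1 + \<epsilon>) * root h (x * fact h * real h * real g * real N / pi)"
  proof (intro exI[of _ N0] allI impI, elim conjE)
    fix N A assume NN0: "N0 \<le> N" and AN: "A \<subseteq> {1..N}" and B: "Bhg_set h g A"
    define R where "R = root h (x * fact h * real h * real g * real N / pi)"
    have arg0: "0 \<le> x * fact h * real h * real g * real N / pi" using assms(3) by simp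
    have R0: "0 \<le> R" unfolding R_def using arg0 by (rule real_root_ge_zero)
    show "real (card A) \<le> (1 + \<epsilon>) * R"
    proof (rule ccontr)
      assume "\<not> real (card A) \<le> (1 + \<epsilon>) * R"
      hence kR: "(1 + \<epsilon>) * R < real (card A)" by simp
      have epsR: "0 \<le> (1 + \<epsilon>) * R" using eps R0 by simp
      have k1: "1 \<le> card A" using kR epsR by linarith
      have finA: "finite A" using AN finite_subset by blast
      have N1: "1 \<le> N" using k1 AN by (metis atLeastAtMost_iff card.empty ex_in_conv not_one_le_zero order.trans subsetD)
      define T where "T = real (card A) ^ h"
      define \<sigma> where "\<sigma> = pi * T / (G * real (h * N))"
      have "((1 + \<epsilon>) * R) ^ h < T" unfolding T_def using kR epsR hpos by (intro power_strict_mono) auto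
      moreover have "((1 + \<epsilon>) * R) ^ h = x' * G * real h * real N / pi"
        unfolding R_def power_mult_distrib using hpos arg0 by (simp add: x'_def G_def)
      ultimately have TT: "x' * G * real h * real N / pi < T" by simp
      have hN: "0 < real (h * N)" using hpos N1 by simp
      have sx: "x' < \<sigma>"
      proof -
        have "x' * (G * real (h*N)) < pi * T" using TT pi_gt_zero by (simp add: field_simps)
        thus ?thesis unfolding \<sigma>_def using Gpos hN by (simp add: field_simps)
      qed
      have K: "0 < \<sigma> \<and> \<sigma> \<le> pi \<and> T * (4 / (3 - cos (pi / real h)) - 1) ^ h \<le> T * sin \<sigma> / \<sigma> + E"
        unfolding T_def \<sigma>_def G_def E_def by (rule key[OF finA AN N1 h2 g1 B k1])
      show False
      proof (cases "pi \<le> x'")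
        case True then show False using K sx by linarith
      next
        case False
        hence N0d: "N0 = nat \<lceil>E * pi / (\<delta>0 * x' * G * real h)\<rceil> + 1" by (simp add: N0_def)
        have d1: "sin \<sigma> / \<sigma> < sin x' / x'" using sinc_decr[OF x'pos sx] K by simp
        have d2: "sin x' / x' < sin x / x" using sinc_decr[OF assms(3) xx'] False by simp
        have d0: "0 < \<delta>0" using d2 by (simp add: \<delta>0_def)
        have Tpos: "0 < T" using k1 by (simp add: T_def)
        have "T * \<delta>0 \<le> T * (sin x / x - sin \<sigma> / \<sigma>)"
          using d1 Tpos by (intro mult_left_mono) (auto simp: \<delta>0_def)
        also have "\<dots> \<le> E" using K assms(5) by (simp add: right_diff_distrib)
        finally have TE: "T * \<delta>0 \<le> E" .
        have "(x' * G * real h * real N / pi) * \<delta>0 < T * \<delta>0" using TT d0 by (rule mult_strict_right_mono)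
        hence "(x' * G * real h * real N / pi) * \<delta>0 < E" using TE by linarith
        hence "real N * (\<delta>0 * x' * G * real h) < E * pi" using pi_gt_zero by (simp add: field_simps)
        hence "real N < E * pi / (\<delta>0 * x' * G * real h)"
          using d0 x'pos Gpos hpos by (simp add: field_simps)
        also have "\<dots> \<le> real (nat \<lceil>E * pi / (\<delta>0 * x' * G * real h)\<rceil>)" by linarith
        finally have "N < N0" unfolding N0d by linarith
        then show False using NN0 by simp
      qed
    qed
  qed
qed

end
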